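(* Fix two positive integers $b$ and $k$. Then the proportion of points $(r,s)\in\mathbb{N}\times\mathbb{N}$ with $\gcd_b(r,s)=k$ is $\dfrac{1}{k^{b+1}\zeta(b+1)}$; that is, \[ \lim_{N\to\infty}\frac{|\{(r,s): 0<r,s\le N,\ \gcd_b(r,s)=k\}|}{N^2}=\frac{1}{k^{b+1}\zeta(b+1)}, \] where $\zeta$ is the Riemann zeta function.
   Context: For $b\in\mathbb{N}$ and $r,s\in\mathbb{N}$, $\gcd_b(r,s)=\max\{k\in\mathbb{N} : k\mid r \text{ and } k^b\mid s\}$. *)

theory Defs
  imports "HOL-Analysis.Analysis"
begin

definition gcd_b :: "nat \<Rightarrow> nat \<Rightarrow> nat \<Rightarrow> nat" where
  "gcd_b b r s = (GREATEST k. k dvd r \<and> k ^ b dvd s)"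

definition riemann_zeta_real :: "real \<Rightarrow> real" where
  "riemann_zeta_real s = (\<Sum>n. 1 / (real (Suc n)) powr s)"

end

theory Submission
  imports Defs "HOL-Computational_Algebra.Primes"
begin

lemma lcm_pow_eq:
  fixes x y :: nat
  shows "lcm x y ^ b = lcm (x ^ b) (y ^ b)"
proof (cases "x = 0 \<or> y = 0")
  case True
  then show ?thesis by (cases b) auto
next
  case False
  then have g: "gcd x y ^ b \<noteq> 0" by simp
  have "(gcd x y * lcm x y) ^ b = (x * y) ^ b" by (simp only: prod_gcd_lcm_nat[symmetric])
  then have e1: "gcd x y ^ b * lcm x y ^ b = x ^ b * y ^ b" by (simp only: power_mult_distrib)
  have e2: "gcd (x ^ b) (y ^ b) * lcm (x ^ b) (y ^ b) = x ^ b * y ^ b" by (simp only: prod_gcd_lcm_nat[symmetric])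
  have "gcd x y ^ b * lcm x y ^ b = gcd x y ^ b * lcm (x ^ b) (y ^ b)"
    using e1 e2 by (simp only: gcd_exp)
  then show ?thesis using mult_left_cancel[OF g] by blast
qed

lemma lcm_pow_dvd:
  fixes x y s :: nat
  assumes "x ^ b dvd s" "y ^ b dvd s"
  shows "lcm x y ^ b dvd s"
  unfolding lcm_pow_eq using assms by (rule lcm_least)

lemma gcdb_props:
  fixes r s :: nat
  assumes "r > 0"
  shows "gcd_b b r s dvd r" "gcd_b b r s ^ b dvd s"
    "\<And>m. m dvd r \<Longrightarrow> m ^ b dvd s \<Longrightarrow> m \<le> gcd_b b r s"
proof -
  let ?P = "\<lambda>k. k dvd r \<and> k ^ b dvd s"
  have P1: "?P 1" by simp
  have bd: "\<And>y. ?P y \<Longrightarrow> y \<le> r" using assms by (auto intro: dvd_imp_le)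
  have "?P (Greatest ?P)" using GreatestI_nat[of ?P 1 r] P1 bd by blast
  then show "gcd_b b r s dvd r" "gcd_b b r s ^ b dvd s" unfolding gcd_b_def by auto
  show "\<And>m. m dvd r \<Longrightarrow> m ^ b dvd s \<Longrightarrow> m \<le> gcd_b b r s"
    unfolding gcd_b_def by (rule Greatest_le_nat[of ?P _ r]) (auto intro: bd)
qed

lemma gcdb_char:
  fixes r s :: nat
  assumes "r > 0"
  shows "(m dvd r \<and> m ^ b dvd s) \<longleftrightarrow> m dvd gcd_b b r s"
proof
  let ?D = "gcd_b b r s"
  assume m: "m dvd r \<and> m ^ b dvd s"
  have D: "?D dvd r" "?D ^ b dvd s" using gcdb_props[OF assms] by auto
  have l1: "lcm m ?D dvd r" using m D by simp
  have l2: "lcm m ?D ^ b dvd s" using m D lcm_pow_dvd by blast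
  have "lcm m ?D \<le> ?D" using gcdb_props(3)[OF assms l1 l2] .
  moreover have "?D dvd lcm m ?D" by simp
  moreover have "lcm m ?D \<noteq> 0" using l1 assms by (metis dvd_0_left_iff not_gr0)
  ultimately have "lcm m ?D = ?D" using dvd_imp_le by (metis le_antisym not_gr0)
  then show "m dvd ?D" by (metis dvd_lcm1)
next
  let ?D = "gcd_b b r s"
  assume "m dvd ?D"
  then show "m dvd r \<and> m ^ b dvd s" using gcdb_props[OF assms]
    by (meson dvd_trans dvd_power_same)
qed

lemma gcdb_pos: "r > 0 \<Longrightarrow> gcd_b b r s > 0"
  using gcdb_props(1)[of r b s] by (metis dvd_0_left_iff not_gr0)

lemma gcdb_le: "r > 0 \<Longrightarrow> gcd_b b r s \<le> r"
  using gcdb_props(1)[of r b s] by (simp add: dvd_imp_le)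

definition mu :: "nat \<Rightarrow> real" where
  "mu d = (if \<Prod>(prime_factors d) = d then (-1) ^ card (prime_factors d) else 0)"

lemma mu_bound: "\<bar>mu d\<bar> \<le> 1"
  by (simp add: mu_def)

lemma pf_prod_primes:
  fixes T :: "nat set"
  assumes "finite T" "\<And>p. p \<in> T \<Longrightarrow> prime p"
  shows "prime_factors (\<Prod>T) = T"
  using assms
proof (induction T rule: finite_induct)
  case empty then show ?case by simp
next
  case (insert p T)
  have pp: "prime p" using insert.prems by simp
  have IH: "prime_factors (\<Prod>T) = T" using insert.IH insert.prems by simp
  have p0: "p \<noteq> 0" using pp by (metis not_prime_0)
  have "0 \<notin> T" using insert.prems by (metis not_prime_0 insertCI)
  then have T0: "\<Prod>T \<noteq> 0" using insert.hyps(1) by simp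
  have "\<Prod>(insert p T) = p * \<Prod>T" using insert.hyps by simp
  then have "prime_factors (\<Prod>(insert p T)) = prime_factors p \<union> prime_factors (\<Prod>T)"
    using prime_factors_product[OF p0 T0] by simp
  also have "\<dots> = insert p T" using IH pp by (simp add: prime_prime_factors)
  finally show ?case .
qed

lemma prod_primes_dvd:
  fixes T :: "nat set"
  assumes "finite T" "T \<subseteq> prime_factors e"
  shows "\<Prod>T dvd e"
  using assms
proof (induction T rule: finite_induct)
  case empty then show ?case by simp
next
  case (insert p T)
  have pp: "prime p" using insert by auto
  have pe: "p dvd e" using insert by auto
  have Te: "\<Prod>T dvd e" using insert by auto
  have "\<not> p dvd \<Prod>T"
  proof
    assume "p dvd \<Prod>T"
    then obtain q where "q \<in> T" "p dvd q" using pp insert(1)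
      by (metis prime_dvd_prod_iff)
    moreover have "prime q" using \<open>q \<in> T\<close> insert by auto
    ultimately have "p = q" using pp by (metis primes_dvd_imp_eq)
    then show False using insert \<open>q \<in> T\<close> by auto
  qed
  then have "coprime p (\<Prod>T)" using pp by (simp add: prime_imp_coprime)
  then have "p * \<Prod>T dvd e" using pe Te by (simp add: divides_mult)
  then show ?case using insert by simp
qed

lemma alt_sum_pow:
  fixes S :: "'a set"
  assumes "finite S" "S \<noteq> {}"
  shows "(\<Sum>T\<in>Pow S. (-1::real) ^ card T) = 0"
proof -
  have "card {T. T \<subseteq> S \<and> {} \<subseteq> T \<and> even(card T)} = card {T. T \<subseteq> S \<and> {} \<subseteq> T \<and> odd(card T)}"
    using card_subsupersets_even_odd[of S "{}"] assms by auto
  then have "card {T. T \<in> Pow S \<and> even(card T)} = card {T. T \<in> Pow S \<and> odd(card T)}" by simp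
  then show ?thesis using sum_alternating_cancels[of "Pow S" card] assms by simp
qed

lemma sum_mu:
  assumes "e > (0::nat)"
  shows "(\<Sum>d | d dvd e. mu d) = (if e = 1 then 1 else 0)"
proof -
  let ?A = "{d. d dvd e \<and> \<Prod>(prime_factors d) = d}"
  have fin: "finite {d. d dvd e}" using assms by simp
  have "(\<Sum>d | d dvd e. mu d) = (\<Sum>d\<in>?A. (-1) ^ card (prime_factors d))"
  proof -
    have "(\<Sum>d | d dvd e. mu d) = (\<Sum>d\<in>{d \<in> {d. d dvd e}. \<Prod>(prime_factors d) = d}. (-1) ^ card (prime_factors d))"
      unfolding mu_def using sum.inter_filter[OF fin, of "\<lambda>d. (-1::real) ^ card (prime_factors d)" "\<lambda>d. \<Prod>(prime_factors d) = d"]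
      by simp
    also have "{d \<in> {d. d dvd e}. \<Prod>(prime_factors d) = d} = ?A" by auto
    finally show ?thesis .
  qed
  also have "?A = Prod ` Pow (prime_factors e)"
  proof
    show "?A \<subseteq> Prod ` Pow (prime_factors e)"
    proof
      fix d assume d: "d \<in> ?A"
      then have "prime_factors d \<subseteq> prime_factors e" using assms by (intro dvd_prime_factors) auto
      then show "d \<in> Prod ` Pow (prime_factors e)" using d by (metis (mono_tags, lifting) PowI image_eqI mem_Collect_eq)
    qed
    show "Prod ` Pow (prime_factors e) \<subseteq> ?A"
    proof
      fix d assume "d \<in> Prod ` Pow (prime_factors e)"
      then obtain T where T: "T \<subseteq> prime_factors e" "d = \<Prod>T" by auto
      have fT: "finite T" using T(1) finite_subset by blast
      have pT: "\<And>p. p \<in> T \<Longrightarrow> prime p" using T(1) by auto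
      show "d \<in> ?A" using T prod_primes_dvd[OF fT T(1)] pf_prod_primes[OF fT pT] by simp
    qed
  qed
  also have inj: "inj_on Prod (Pow (prime_factors e))"
  proof (rule inj_onI)
    fix T U assume "T \<in> Pow (prime_factors e)" "U \<in> Pow (prime_factors e)" "\<Prod>T = \<Prod>U"
    then show "T = U" using pf_prod_primes
      by (metis PowD finite_set_mset in_prime_factors_imp_prime rev_finite_subset subsetD)
  qed
  have "(\<Sum>d\<in>Prod ` Pow (prime_factors e). (-1::real) ^ card (prime_factors d))
        = (\<Sum>T\<in>Pow (prime_factors e). (-1) ^ card (prime_factors (\<Prod>T)))"
    using sum.reindex[OF inj] by simp
  also have "\<dots> = (\<Sum>T\<in>Pow (prime_factors e). (-1) ^ card T)"
  proof (rule sum.cong[OF refl])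
    fix T assume T: "T \<in> Pow (prime_factors e)"
    have fT: "finite T" using T finite_subset by auto
    have pT: "\<And>p. p \<in> T \<Longrightarrow> prime p" using T by auto
    show "(-1::real) ^ card (prime_factors (\<Prod>T)) = (-1) ^ card T" using pf_prod_primes[OF fT pT] by simp
  qed
  also have "\<dots> = (if e = 1 then 1 else 0)"
  proof (cases "e = 1")
    case True then show ?thesis by simp
  next
    case False
    then obtain p where "prime p" "p dvd e" using prime_factor_nat by blast
    then have "p \<in> prime_factors e" using assms by (intro prime_factorsI) auto
    then have "prime_factors e \<noteq> {}" by blast
    then show ?thesis using alt_sum_pow[of "prime_factors e"] False by simp
  qed
  finally show ?thesis .
qed

lemma pointwise:
  fixes r s N k :: nat
  assumes r: "r \<in> {1..N}" and k: "k > 0"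
  shows "(if gcd_b b r s = k then 1 else 0) =
    (\<Sum>d\<in>{1..N}. mu d * (if d*k dvd r \<and> (d*k)^b dvd s then 1 else 0))"
proof -
  let ?D = "gcd_b b r s"
  have r0: "r > 0" using r by auto
  have "(\<Sum>d\<in>{1..N}. mu d * (if d*k dvd r \<and> (d*k)^b dvd s then 1 else 0))
      = (\<Sum>d\<in>{1..N}. mu d * (if d*k dvd ?D then 1 else 0))"
    using gcdb_char[OF r0] by simp
  also have "\<dots> = (if ?D = k then 1 else 0)"
  proof (cases "k dvd ?D")
    case False
    then have "\<And>d. \<not> d*k dvd ?D" by (meson dvd_mult_right)
    then show ?thesis using False by auto
  next
    case True
    then obtain e where e: "?D = k * e" by blast
    have e0: "e > 0" using e gcdb_pos[OF r0, of b s] by (metis mult_0_right not_gr0)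
    have "e \<le> k * e" using k by simp
    moreover have "k * e \<le> r" using e gcdb_le[OF r0, of b s] by simp
    moreover have "r \<le> N" using r by simp
    ultimately have eN: "e \<le> N" by linarith
    have "(\<Sum>d\<in>{1..N}. mu d * (if d*k dvd ?D then 1 else 0)) = (\<Sum>d\<in>{1..N}. if d dvd e then mu d else 0)"
      using e k by (intro sum.cong) (auto simp: mult.commute[of _ k])
    also have "\<dots> = (\<Sum>d\<in>{d\<in>{1..N}. d dvd e}. mu d)"
      using sum.inter_filter[of "{1..N}" mu "\<lambda>d. d dvd e"] by simp
    also have "{d\<in>{1..N}. d dvd e} = {d. d dvd e}"
      using e0 eN by (auto intro: dvd_pos_nat dest: dvd_imp_le)
    also have "(\<Sum>d | d dvd e. mu d) = (if e = 1 then 1 else 0)" using sum_mu[OF e0] .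
    also have "\<dots> = (if ?D = k then 1 else 0)" using e k by auto
    finally show ?thesis .
  qed
  finally show ?thesis by simp
qed

lemma count_dvd:
  fixes m N :: nat
  assumes "m > 0"
  shows "(\<Sum>r\<in>{1..N}. if m dvd r then 1 else 0 :: real) = real (N div m)"
proof (induction N)
  case 0 then show ?case by simp
next
  case (Suc N)
  have "(\<Sum>r\<in>{1..Suc N}. if m dvd r then 1 else 0 :: real) = real (N div m) + (if m dvd Suc N then 1 else 0)"
    using Suc by (simp add: sum.atLeast1_atMost_eq)
  also have "\<dots> = real (Suc N div m)" using assms by (auto simp: div_Suc dvd_eq_mod_eq_0)
  finally show ?case .
qed

lemma count_formula:
  fixes N k :: nat
  assumes k: "k > 0"
  shows "real (card {(r, s). r \<in> {1..N} \<and> s \<in> {1..N} \<and> gcd_b b r s = k})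
    = (\<Sum>d\<in>{1..N}. mu d * real (N div (d*k)) * real (N div ((d*k)^b)))"
proof -
  have "{(r, s). r \<in> {1..N} \<and> s \<in> {1..N} \<and> gcd_b b r s = k}
     = {p \<in> {1..N} \<times> {1..N}. gcd_b b (fst p) (snd p) = k}" by auto
  then have "real (card {(r, s). r \<in> {1..N} \<and> s \<in> {1..N} \<and> gcd_b b r s = k})
     = (\<Sum>p\<in>{1..N} \<times> {1..N}. if gcd_b b (fst p) (snd p) = k then 1 else 0)"
    by (simp add: sum.inter_filter[symmetric])
  also have "\<dots> = (\<Sum>r\<in>{1..N}. \<Sum>s\<in>{1..N}. if gcd_b b r s = k then 1 else 0)"
    by (simp add: sum.cartesian_product case_prod_beta)
  also have "\<dots> = (\<Sum>r\<in>{1..N}. \<Sum>s\<in>{1..N}. \<Sum>d\<in>{1..N}.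
        mu d * ((if d*k dvd r then 1 else 0) * (if (d*k)^b dvd s then 1 else 0)))"
  proof (intro sum.cong refl)
    fix r s assume r: "r \<in> {1..N}"
    show "(if gcd_b b r s = k then 1 else 0) = (\<Sum>d\<in>{1..N}.
        mu d * ((if d*k dvd r then 1 else 0) * (if (d*k)^b dvd s then 1 else 0)))"
      by (subst pointwise[OF r k]) (auto intro!: sum.cong)
  qed
  also have "\<dots> = (\<Sum>r\<in>{1..N}. \<Sum>d\<in>{1..N}. \<Sum>s\<in>{1..N}.
        mu d * ((if d*k dvd r then 1 else 0) * (if (d*k)^b dvd s then 1 else 0)))"
    by (rule sum.cong[OF refl], rule sum.swap)
  also have "\<dots> = (\<Sum>d\<in>{1..N}. \<Sum>r\<in>{1..N}. \<Sum>s\<in>{1..N}.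
        mu d * ((if d*k dvd r then 1 else 0) * (if (d*k)^b dvd s then 1 else 0)))"
    by (rule sum.swap)
  also have "\<dots> = (\<Sum>d\<in>{1..N}. mu d * ((\<Sum>r\<in>{1..N}. if d*k dvd r then 1 else 0) *
        (\<Sum>s\<in>{1..N}. if (d*k)^b dvd s then 1 else 0)))"
    by (intro sum.cong refl) (subst sum_product, simp only: sum_distrib_left)
  also have "\<dots> = (\<Sum>d\<in>{1..N}. mu d * real (N div (d*k)) * real (N div ((d*k)^b)))"
  proof (intro sum.cong refl)
    fix d assume "d \<in> {1..N}"
    then have p: "d * k > 0" using k by simp
    show "mu d * ((\<Sum>r\<in>{1..N}. if d*k dvd r then 1 else 0) *
        (\<Sum>s\<in>{1..N}. if (d*k)^b dvd s then 1 else 0)) = mu d * real (N div (d*k)) * real (N div ((d*k)^b))"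
      using count_dvd[OF p, of N] count_dvd[of "(d*k)^b" N] p by simp
  qed
  finally show ?thesis .
qed

lemma div_bounds:
  fixes N m :: nat
  assumes "m > 0"
  shows "real (N div m) * real m \<le> real N" "real N < (real (N div m) + 1) * real m"
proof -
  have e: "N = N div m * m + N mod m" by simp
  have "N mod m < m" using assms by simp
  then have "real (N mod m) < real m" by simp
  moreover have "real N = real (N div m) * real m + real (N mod m)"
    by (metis e of_nat_add of_nat_mult)
  ultimately show "real (N div m) * real m \<le> real N" "real N < (real (N div m) + 1) * real m"
    by (auto simp: algebra_simps)
qed

lemma div_over_N_le:
  fixes N m :: nat
  assumes "m > 0"
  shows "real (N div m) / real N \<le> 1 / real m"
proof (cases "N = 0")
  case True then show ?thesis by simp
next
  case False
  then show ?thesis using div_bounds(1)[OF assms, of N] assms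
    by (simp add: divide_simps mult.commute)
qed

lemma div_over_N_lim:
  fixes m :: nat
  assumes "m > 0"
  shows "(\<lambda>N. real (N div m) / real N) \<longlonglongrightarrow> 1 / real m"
proof (rule real_tendsto_sandwich[where f = "\<lambda>N. 1 / real m - 1 / real N" and h = "\<lambda>N. 1 / real m"])
  show "\<forall>\<^sub>F N in sequentially. 1 / real m - 1 / real N \<le> real (N div m) / real N"
  proof (rule eventually_sequentiallyI[of 1])
    fix N :: nat assume "1 \<le> N"
    then have Np: "real N > 0" by simp
    have "real N < (real (N div m) + 1) * real m" using div_bounds(2)[OF assms] .
    then have "real N / real m < real (N div m) + 1" using assms by (simp add: divide_simps)
    then have "(real N / real m - 1) / real N \<le> real (N div m) / real N"
      using Np by (simp add: divide_right_mono)
    moreover have "(real N / real m - 1) / real N = 1 / real m - 1 / real N"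
      using Np by (simp add: field_simps)
    ultimately show "1 / real m - 1 / real N \<le> real (N div m) / real N" by simp
  qed
  show "\<forall>\<^sub>F N in sequentially. real (N div m) / real N \<le> 1 / real m"
    using div_over_N_le[OF assms] by simp
  show "(\<lambda>N. 1 / real m - 1 / real N) \<longlonglongrightarrow> 1 / real m"
    using tendsto_diff[OF tendsto_const lim_1_over_n, of "1 / real m"] by simp
  show "(\<lambda>N. 1 / real m) \<longlonglongrightarrow> 1 / real m" by simp
qed

lemma summable_M: "summable (\<lambda>d. inverse (real (Suc d) ^ 2))"
  using inverse_power_summable[of 2, where 'a=real] summable_Suc_iff[of "\<lambda>n. inverse (real n ^ 2)"]
  by simp

definition cnt :: "nat \<Rightarrow> nat \<Rightarrow> nat \<Rightarrow> real" where
  "cnt b k N = real (card {(r, s). r \<in> {1..N} \<and> s \<in> {1..N} \<and> gcd_b b r s = k})"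

definition cmu :: "nat \<Rightarrow> real" where
  "cmu b = (\<Sum>d. mu (Suc d) / real (Suc d) ^ (b + 1))"

lemma term_bound:
  fixes d k N b :: nat
  assumes "k > 0" "b > 0"
  shows "\<bar>mu (Suc d) * (real (N div (Suc d * k)) / real N) * (real (N div ((Suc d * k) ^ b)) / real N)\<bar>
          \<le> inverse (real (Suc d) ^ 2)"
proof -
  let ?m1 = "Suc d * k" and ?m2 = "(Suc d * k) ^ b"
  have m1: "?m1 > 0" using assms by simp
  have m2: "?m2 > 0" using assms by simp
  have "Suc d * 1 \<le> Suc d * k" using assms by (intro mult_le_mono2) simp
  then have "Suc d \<le> ?m1" by simp
  moreover have "?m1 \<le> ?m2"
  proof -
    have "1 \<le> ?m1" using m1 by linarith
    then show ?thesis by (rule self_le_power[OF _ assms(2)])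
  qed
  ultimately have "Suc d \<le> ?m2" by linarith
  have le1: "real (Suc d) \<le> real ?m1" using \<open>Suc d \<le> ?m1\<close> by (simp only: of_nat_le_iff)
  have le2: "real (Suc d) \<le> real ?m2" using \<open>Suc d \<le> ?m2\<close> by (simp only: of_nat_le_iff)
  have x1: "0 \<le> real (N div ?m1) / real N" "real (N div ?m1) / real N \<le> 1 / real (Suc d)"
    using div_over_N_le[OF m1, of N] le1 by (auto intro: order_trans simp: frac_le)
  have x2: "0 \<le> real (N div ?m2) / real N" "real (N div ?m2) / real N \<le> 1 / real (Suc d)"
    using div_over_N_le[OF m2, of N] le2 by (auto intro: order_trans simp: frac_le)
  have "\<bar>mu (Suc d) * (real (N div ?m1) / real N) * (real (N div ?m2) / real N)\<bar>
      = \<bar>mu (Suc d)\<bar> * (real (N div ?m1) / real N) * (real (N div ?m2) / real N)"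
    using x1 x2 by (simp add: abs_mult)
  also have "\<dots> \<le> 1 * (1 / real (Suc d)) * (1 / real (Suc d))"
    using x1 x2 mu_bound by (intro mult_mono) auto
  also have "\<dots> = inverse (real (Suc d) ^ 2)" by (simp add: power2_eq_square field_simps)
  finally show ?thesis .
qed

lemma cnt_suminf:
  fixes k N b :: nat
  assumes k: "k > 0"
  shows "cnt b k N / real N ^ 2 = (\<Sum>d. mu (Suc d) * (real (N div (Suc d * k)) / real N) * (real (N div ((Suc d * k) ^ b)) / real N))"
proof -
  let ?f = "\<lambda>d. mu d * (real (N div (d * k)) / real N) * (real (N div ((d * k) ^ b)) / real N)"
  have z: "?f (Suc d) = 0" if "d \<notin> {..<N}" for d
  proof -
    have "N < Suc d" using that by simp
    also have "Suc d * 1 \<le> Suc d * k" using k by (intro mult_le_mono2) simp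
    then have "Suc d \<le> Suc d * k" by simp
    finally have "N div (Suc d * k) = 0" by simp
    then show ?thesis by simp
  qed
  have "(\<Sum>d. ?f (Suc d)) = (\<Sum>d<N. ?f (Suc d))" by (rule suminf_finite) (use z in auto)
  also have "\<dots> = (\<Sum>d=1..N. ?f d)" by (rule sum_bounds_lt_plus1)
  also have "\<dots> = (\<Sum>d=1..N. mu d * real (N div (d*k)) * real (N div ((d*k)^b))) / real N ^ 2"
    by (simp add: sum_divide_distrib power2_eq_square)
  also have "\<dots> = cnt b k N / real N ^ 2" using count_formula[OF k, of N b] by (simp add: cnt_def)
  finally show ?thesis by simp
qed

lemma summable_cmu: "b > 0 \<Longrightarrow> summable (\<lambda>d. mu (Suc d) / real (Suc d) ^ (b + 1))"
proof (rule summable_comparison_test[OF _ summable_M])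
  assume b: "b > 0"
  show "\<exists>N. \<forall>n\<ge>N. norm (mu (Suc n) / real (Suc n) ^ (b + 1)) \<le> inverse (real (Suc n) ^ 2)"
  proof (intro exI allI impI)
    fix n :: nat
    have "real (Suc n) ^ 2 \<le> real (Suc n) ^ (b + 1)" using b by (intro power_increasing) auto
    then have h1: "1 / real (Suc n) ^ (b + 1) \<le> 1 / real (Suc n) ^ 2" by (intro divide_left_mono) auto
    have h2: "\<bar>mu (Suc n)\<bar> / real (Suc n) ^ (b + 1) \<le> 1 / real (Suc n) ^ (b + 1)"
      using mu_bound by (intro divide_right_mono) auto
    have "norm (mu (Suc n) / real (Suc n) ^ (b + 1)) = \<bar>mu (Suc n)\<bar> / real (Suc n) ^ (b + 1)"
      by (simp add: abs_divide)
    also have "\<dots> \<le> 1 / real (Suc n) ^ 2" using h1 h2 by linarith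
    also have "\<dots> = inverse (real (Suc n) ^ 2)" by (simp add: divide_inverse)
    finally show "norm (mu (Suc n) / real (Suc n) ^ (b + 1)) \<le> inverse (real (Suc n) ^ 2)" .
  qed
qed

lemma lim_k:
  fixes k b :: nat
  assumes k: "k > 0" and b: "b > 0"
  shows "(\<lambda>N. cnt b k N / real N ^ 2) \<longlonglongrightarrow> cmu b / real k ^ (b + 1)"
proof -
  let ?a = "\<lambda>d N. mu (Suc d) * (real (N div (Suc d * k)) / real N) * (real (N div ((Suc d * k) ^ b)) / real N)"
  let ?l = "\<lambda>d. mu (Suc d) * (1 / real (Suc d * k)) * (1 / real ((Suc d * k) ^ b))"
  have lim: "\<And>d. (\<lambda>N. ?a d N) \<longlonglongrightarrow> ?l d"
    using k by (intro tendsto_mult tendsto_const div_over_N_lim) auto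
  have bnd: "eventually (\<lambda>(d,N). norm (?a d N) \<le> inverse (real (Suc d) ^ 2)) (at_top \<times>\<^sub>F sequentially)"
  proof (rule always_eventually, clarify)
    fix d N :: nat
    show "norm (?a d N) \<le> inverse (real (Suc d) ^ 2)"
      using term_bound[OF k b, of d N] by (simp only: real_norm_def)
  qed
  have T: "(\<lambda>N. \<Sum>d. ?a d N) \<longlonglongrightarrow> (\<Sum>d. ?l d)"
    using tannerys_theorem[OF lim bnd summable_M] by simp
  have lfact: "?l d = mu (Suc d) / real (Suc d) ^ (b + 1) / real k ^ (b + 1)" for d
  proof -
    have eq: "real (Suc d * k) * real ((Suc d * k) ^ b) = real (Suc d) ^ (b+1) * real k ^ (b+1)"
    proof -
      have "real (Suc d * k) * real ((Suc d * k) ^ b) = real ((Suc d * k) ^ Suc b)"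
        by (simp only: of_nat_mult[symmetric] power_Suc)
      also have "\<dots> = real (Suc d) ^ (b+1) * real k ^ (b+1)"
        by (simp only: of_nat_power power_mult_distrib of_nat_mult Suc_eq_plus1)
      finally show ?thesis .
    qed
    have "?l d = mu (Suc d) / (real (Suc d * k) * real ((Suc d * k) ^ b))"
      by (simp only: times_divide_eq_right divide_divide_eq_left mult_1_right)
    also have "\<dots> = mu (Suc d) / (real (Suc d) ^ (b+1) * real k ^ (b+1))"
      by (subst eq) (rule refl)
    also have "\<dots> = mu (Suc d) / real (Suc d) ^ (b + 1) / real k ^ (b + 1)"
      by (simp only: divide_divide_eq_left)
    finally show ?thesis .
  qed
  have lf: "(\<lambda>d. ?l d) = (\<lambda>d. mu (Suc d) / real (Suc d) ^ (b + 1) / real k ^ (b + 1))"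
    using lfact by (intro ext)
  have "(\<Sum>d. ?l d) = cmu b / real k ^ (b + 1)"
    unfolding lf cmu_def by (rule suminf_divide[OF summable_cmu[OF b]])
  moreover have "(\<lambda>N. cnt b k N / real N ^ 2) = (\<lambda>N. \<Sum>d. ?a d N)"
    using cnt_suminf[OF k] by auto
  ultimately show ?thesis using T by simp
qed

lemma card_dvd_filter:
  fixes m N :: nat
  assumes "m > 0"
  shows "card {r \<in> {1..N}. m dvd r} = N div m"
proof -
  have "real (card {r \<in> {1..N}. m dvd r}) = (\<Sum>r\<in>{1..N}. if m dvd r then 1 else 0 :: real)"
    by (simp add: sum.inter_filter[symmetric])
  then show ?thesis using count_dvd[OF assms, of N] by linarith
qed

lemma cnt_le:
  fixes k N b :: nat
  assumes k: "k > 0"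
  shows "cnt b k N \<le> real (N div k) * real (N div k ^ b)"
proof -
  have sub: "{(r, s). r \<in> {1..N} \<and> s \<in> {1..N} \<and> gcd_b b r s = k}
     \<subseteq> {r \<in> {1..N}. k dvd r} \<times> {s \<in> {1..N}. k ^ b dvd s}"
  proof
    fix x assume "x \<in> {(r, s). r \<in> {1..N} \<and> s \<in> {1..N} \<and> gcd_b b r s = k}"
    then obtain r s where x: "x = (r, s)" "r \<in> {1..N}" "s \<in> {1..N}" "gcd_b b r s = k" by auto
    then have r0: "r > 0" by simp
    have "k dvd r" using gcdb_props(1)[OF r0, of b s] x(4) by simp
    moreover have "k ^ b dvd s" using gcdb_props(2)[OF r0, of b s] x(4) by simp
    ultimately show "x \<in> {r \<in> {1..N}. k dvd r} \<times> {s \<in> {1..N}. k ^ b dvd s}"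
      using x(1,2,3) by simp
  qed
  have "card {(r, s). r \<in> {1..N} \<and> s \<in> {1..N} \<and> gcd_b b r s = k}
     \<le> card ({r \<in> {1..N}. k dvd r} \<times> {s \<in> {1..N}. k ^ b dvd s})"
    by (rule card_mono[OF _ sub]) auto
  also have "\<dots> = (N div k) * (N div k ^ b)"
  proof -
    have kb: "k ^ b > 0" using k by simp
    show ?thesis by (simp only: card_cartesian_product card_dvd_filter[OF k] card_dvd_filter[OF kb])
  qed
  finally show ?thesis unfolding cnt_def by (simp only: of_nat_mult[symmetric] of_nat_le_iff)
qed

lemma partition:
  fixes b N :: nat
  shows "(\<Sum>k\<in>{1..N}. cnt b k N) = real N ^ 2"
proof -
  let ?S = "\<lambda>k. {(r, s). r \<in> {1..N} \<and> s \<in> {1..N} \<and> gcd_b b r s = k}"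
  have U: "(\<Union>k\<in>{1..N}. ?S k) = {1..N} \<times> {1..N}"
  proof
    show "(\<Union>k\<in>{1..N}. ?S k) \<subseteq> {1..N} \<times> {1..N}" by auto
    show "{1..N} \<times> {1..N} \<subseteq> (\<Union>k\<in>{1..N}. ?S k)"
    proof
      fix x assume "x \<in> {1..N} \<times> {1..N}"
      then obtain r s where x: "x = (r, s)" "r \<in> {1..N}" "s \<in> {1..N}" by auto
      then have r0: "r > 0" by simp
      have "gcd_b b r s \<in> {1..N}" using gcdb_pos[OF r0, of b s] gcdb_le[OF r0, of b s] x(2)
        by simp
      then show "x \<in> (\<Union>k\<in>{1..N}. ?S k)" using x by blast
    qed
  qed
  have fin: "\<forall>k\<in>{1..N}. finite (?S k)"
  proof
    fix k show "finite (?S k)"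
      by (rule finite_subset[of _ "{1..N} \<times> {1..N}"]) auto
  qed
  have disj: "\<forall>i\<in>{1..N}. \<forall>j\<in>{1..N}. i \<noteq> j \<longrightarrow> ?S i \<inter> ?S j = {}" by auto
  have "card (\<Union>k\<in>{1..N}. ?S k) = (\<Sum>k\<in>{1..N}. card (?S k))"
    by (rule card_UN_disjoint[OF _ fin disj]) simp
  then have "(\<Sum>k\<in>{1..N}. card (?S k)) = N * N" using U by (simp add: card_cartesian_product)
  then have "real (\<Sum>k\<in>{1..N}. card (?S k)) = real N ^ 2" by (simp add: power2_eq_square)
  then show ?thesis unfolding cnt_def by simp
qed

lemma cnt_zero:
  fixes b N k :: nat
  assumes "N < k"
  shows "cnt b k N = 0"
proof -
  have E: "{(r, s). r \<in> {1..N} \<and> s \<in> {1..N} \<and> gcd_b b r s = k} = {}"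
  proof (rule ccontr)
    assume "{(r, s). r \<in> {1..N} \<and> s \<in> {1..N} \<and> gcd_b b r s = k} \<noteq> {}"
    then obtain r s where x: "r \<in> {1..N}" "gcd_b b r s = k" by auto
    then have r0: "r > 0" by simp
    show False using gcdb_le[OF r0, of b s] x assms by simp
  qed
  show ?thesis unfolding cnt_def E by simp
qed

lemma sum_one:
  fixes b N :: nat
  assumes N: "N > 0"
  shows "(\<Sum>k. cnt b (Suc k) N / real N ^ 2) = 1"
proof -
  have "(\<Sum>k. cnt b (Suc k) N / real N ^ 2) = (\<Sum>k<N. cnt b (Suc k) N / real N ^ 2)"
    by (rule suminf_finite) (auto simp: cnt_zero)
  also have "\<dots> = (\<Sum>k=1..N. cnt b k N / real N ^ 2)" by (rule sum_bounds_lt_plus1)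
  also have "\<dots> = (\<Sum>k=1..N. cnt b k N) / real N ^ 2" by (simp add: sum_divide_distrib)
  also have "\<dots> = 1" using partition[of b N] N by simp
  finally show ?thesis .
qed

lemma cnt_bound:
  fixes b N k :: nat
  assumes b: "b > 0"
  shows "\<bar>cnt b (Suc k) N / real N ^ 2\<bar> \<le> inverse (real (Suc k) ^ 2)"
proof -
  have c0: "0 \<le> cnt b (Suc k) N" unfolding cnt_def by simp
  have p2: "Suc k ^ b > 0" by simp
  have "Suc k \<le> Suc k ^ b" by (rule self_le_power[OF _ b]) simp
  then have le2: "real (Suc k) \<le> real (Suc k ^ b)" by (simp only: of_nat_le_iff)
  have x1: "0 \<le> real (N div Suc k) / real N" "real (N div Suc k) / real N \<le> 1 / real (Suc k)"
    using div_over_N_le[of "Suc k" N] by auto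
  have x2: "0 \<le> real (N div Suc k ^ b) / real N" "real (N div Suc k ^ b) / real N \<le> 1 / real (Suc k)"
    using div_over_N_le[OF p2, of N] le2 by (auto intro: order_trans simp: frac_le)
  have "\<bar>cnt b (Suc k) N / real N ^ 2\<bar> = cnt b (Suc k) N / real N ^ 2" using c0 by simp
  also have "\<dots> \<le> real (N div Suc k) * real (N div Suc k ^ b) / real N ^ 2"
    using cnt_le[of "Suc k" b N] by (intro divide_right_mono) auto
  also have "\<dots> = (real (N div Suc k) / real N) * (real (N div Suc k ^ b) / real N)"
    by (simp add: power2_eq_square)
  also have "\<dots> \<le> (1 / real (Suc k)) * (1 / real (Suc k))"
    using x1 x2 by (intro mult_mono) auto
  also have "\<dots> = inverse (real (Suc k) ^ 2)" by (simp add: power2_eq_square field_simps)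
  finally show ?thesis .
qed

lemma zeta_eq: "riemann_zeta_real (real (b + 1)) = (\<Sum>n. 1 / real (Suc n) ^ (b + 1))"
proof -
  have "(\<lambda>n. 1 / real (Suc n) powr real (b + 1)) = (\<lambda>n. 1 / real (Suc n) ^ (b + 1))"
  proof
    fix n :: nat
    have "real (Suc n) > 0" by simp
    then show "1 / real (Suc n) powr real (b + 1) = 1 / real (Suc n) ^ (b + 1)"
      by (subst powr_realpow) auto
  qed
  then show ?thesis unfolding riemann_zeta_real_def by simp
qed

lemma summable_zeta: "b > 0 \<Longrightarrow> summable (\<lambda>n. 1 / real (Suc n) ^ (b + 1))"
proof (rule summable_comparison_test[OF _ summable_M])
  assume b: "b > 0"
  show "\<exists>N. \<forall>n\<ge>N. norm (1 / real (Suc n) ^ (b + 1)) \<le> inverse (real (Suc n) ^ 2)"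
  proof (intro exI allI impI)
    fix n :: nat
    have "real (Suc n) ^ 2 \<le> real (Suc n) ^ (b + 1)" using b by (intro power_increasing) auto
    then have "1 / real (Suc n) ^ (b + 1) \<le> 1 / real (Suc n) ^ 2" by (intro divide_left_mono) auto
    then show "norm (1 / real (Suc n) ^ (b + 1)) \<le> inverse (real (Suc n) ^ 2)"
      by (simp add: divide_inverse)
  qed
qed

lemma cmu_zeta:
  fixes b :: nat
  assumes b: "b > 0"
  shows "cmu b * riemann_zeta_real (real (b + 1)) = 1"
proof -
  let ?a = "\<lambda>k N. cnt b (Suc k) N / real N ^ 2"
  let ?l = "\<lambda>k. cmu b / real (Suc k) ^ (b + 1)"
  have lim: "\<And>k. (\<lambda>N. ?a k N) \<longlonglongrightarrow> ?l k"
    by (rule lim_k[OF _ b]) simp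
  have bnd: "eventually (\<lambda>(k,N). norm (?a k N) \<le> inverse (real (Suc k) ^ 2)) (at_top \<times>\<^sub>F sequentially)"
  proof (rule always_eventually, clarify)
    fix k N :: nat
    show "norm (?a k N) \<le> inverse (real (Suc k) ^ 2)"
      using cnt_bound[OF b, of k N] by (simp only: real_norm_def)
  qed
  have T: "(\<lambda>N. \<Sum>k. ?a k N) \<longlonglongrightarrow> (\<Sum>k. ?l k)"
    using tannerys_theorem[OF lim bnd summable_M] by simp
  have "eventually (\<lambda>N. (\<Sum>k. ?a k N) = 1) sequentially"
    using eventually_gt_at_top[of "0::nat"] by eventually_elim (rule sum_one)
  then have T1: "(\<lambda>N. \<Sum>k. ?a k N) \<longlonglongrightarrow> 1" by (rule tendsto_eventually)
  have "(\<Sum>k. ?l k) = 1" using LIMSEQ_unique[OF T T1] .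
  moreover have "(\<Sum>k. ?l k) = cmu b * (\<Sum>n. 1 / real (Suc n) ^ (b + 1))"
  proof -
    have "(\<lambda>k. ?l k) = (\<lambda>k. cmu b * (1 / real (Suc k) ^ (b + 1)))" by simp
    then show ?thesis using suminf_mult[OF summable_zeta[OF b], of "cmu b"] by simp
  qed
  ultimately show ?thesis using zeta_eq[of b] by simp
qed

theorem mainTheorem2:
  fixes b k :: nat
  assumes "b > 0" and "k > 0"
  shows "(\<lambda>N. real (card {(r, s). r \<in> {1..N} \<and> s \<in> {1..N} \<and> gcd_b b r s = k})
            / (real N)^2)
         \<longlonglongrightarrow> 1 / ((real k) ^ (b + 1) * riemann_zeta_real (real (b + 1)))"
proof -
  have L: "(\<lambda>N. cnt b k N / real N ^ 2) \<longlonglongrightarrow> cmu b / real k ^ (b + 1)"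
    by (rule lim_k[OF assms(2,1)])
  have z: "cmu b * riemann_zeta_real (real (b + 1)) = 1" by (rule cmu_zeta[OF assms(1)])
  then have "riemann_zeta_real (real (b + 1)) \<noteq> 0" by auto
  then have "cmu b = 1 / riemann_zeta_real (real (b + 1))" using z by (simp add: field_simps)
  then have "cmu b / real k ^ (b + 1) = 1 / ((real k) ^ (b + 1) * riemann_zeta_real (real (b + 1)))"
    by simp
  then show ?thesis using L unfolding cnt_def by simp
qed

end
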